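(* Let $P$ be a poset, let $\mathbf{Ch}_P$ be the full subcategory of $\mathbf{Pos}_{in}$ whose objects are the chains of $P$, and let $\mathcal{F}_P:\mathbf{Ch}_P\to\mathbf{Pos}$ be the inclusion functor (the diagram of chains of $P$). Then $\operatorname{colim}\mathcal{F}_P=P$ in $\mathbf{Pos}$.
   Context: $\mathbf{Pos}$ is the category of posets and order-preserving maps; $\mathbf{Pos}_{in}$ is its wide subcategory whose morphisms are the order-preserving inclusions. A chain of $P$ is a totally ordered sub-poset of $P$ (with the induced order); morphisms in $\mathbf{Ch}_P$ are the inclusions between chains. *)

theory Defs
  imports Main
begin

definition poset_on :: "'a set \<Rightarrow> ('a \<Rightarrow> 'a \<Rightarrow> bool) \<Rightarrow> bool" where
  "poset_on A le \<longleftrightarrow>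
     (\<forall>x\<in>A. le x x) \<and>
     (\<forall>x\<in>A. \<forall>y\<in>A. le x y \<and> le y x \<longrightarrow> x = y) \<and>
     (\<forall>x\<in>A. \<forall>y\<in>A. \<forall>z\<in>A. le x y \<and> le y z \<longrightarrow> le x z)"

definition chain_of :: "'a set \<Rightarrow> ('a \<Rightarrow> 'a \<Rightarrow> bool) \<Rightarrow> 'a set \<Rightarrow> bool" where
  "chain_of A le C \<longleftrightarrow> C \<subseteq> A \<and> (\<forall>x\<in>C. \<forall>y\<in>C. le x y \<or> le y x)"

definition pos_hom :: "'a set \<Rightarrow> ('a \<Rightarrow> 'a \<Rightarrow> bool) \<Rightarrow> 'b set \<Rightarrow> ('b \<Rightarrow> 'b \<Rightarrow> bool) \<Rightarrow> ('a \<Rightarrow> 'b) \<Rightarrow> bool" where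
  "pos_hom A le B le' f \<longleftrightarrow> f ` A \<subseteq> B \<and> monotone_on A le le' f"

text \<open>A cocone over the chain diagram F_P with vertex (B, le'): one Pos-morphism g C : C \<rightarrow> B per
  chain C, compatible with the inclusions C \<subseteq> D between chains.\<close>
definition chain_cocone :: "'a set \<Rightarrow> ('a \<Rightarrow> 'a \<Rightarrow> bool) \<Rightarrow> 'b set \<Rightarrow> ('b \<Rightarrow> 'b \<Rightarrow> bool)
     \<Rightarrow> ('a set \<Rightarrow> 'a \<Rightarrow> 'b) \<Rightarrow> bool" where
  "chain_cocone A le B le' g \<longleftrightarrow>
     (\<forall>C. chain_of A le C \<longrightarrow> pos_hom C le B le' (g C)) \<and>
     (\<forall>C D. chain_of A le C \<longrightarrow> chain_of A le D \<longrightarrow> C \<subseteq> D \<longrightarrow> (\<forall>x\<in>C. g C x = g D x))"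

end

theory Submission
  imports Defs
begin

theorem proposition6p1:
  fixes A :: "'a set" and le :: "'a \<Rightarrow> 'a \<Rightarrow> bool"
  assumes "poset_on A le"
  shows "chain_cocone A le A le (\<lambda>C x. x) \<and>
    (\<forall>(B :: 'b set) le' g. poset_on B le' \<longrightarrow> chain_cocone A le B le' g \<longrightarrow>
       (\<exists>f. pos_hom A le B le' f \<and> (\<forall>C. chain_of A le C \<longrightarrow> (\<forall>x\<in>C. f x = g C x)) \<and>
            (\<forall>f'. pos_hom A le B le' f' \<and> (\<forall>C. chain_of A le C \<longrightarrow> (\<forall>x\<in>C. f' x = g C x))
                  \<longrightarrow> (\<forall>x\<in>A. f' x = f x))))"
proof -
  have refl: "\<And>x. x \<in> A \<Longrightarrow> le x x" using assms by (simp add: poset_on_def)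
  have single: "\<And>x. x \<in> A \<Longrightarrow> chain_of A le {x}" using refl by (simp add: chain_of_def)
  have pair: "\<And>x y. x \<in> A \<Longrightarrow> y \<in> A \<Longrightarrow> le x y \<Longrightarrow> chain_of A le {x, y}"
    using refl by (auto simp: chain_of_def)
  have part1: "chain_cocone A le A le (\<lambda>C x. x)"
    by (auto simp: chain_cocone_def pos_hom_def chain_of_def monotone_on_def)
  have part2: "\<exists>f. pos_hom A le B le' f \<and> (\<forall>C. chain_of A le C \<longrightarrow> (\<forall>x\<in>C. f x = g C x)) \<and>
            (\<forall>f'. pos_hom A le B le' f' \<and> (\<forall>C. chain_of A le C \<longrightarrow> (\<forall>x\<in>C. f' x = g C x))
                  \<longrightarrow> (\<forall>x\<in>A. f' x = f x))"
    if cc: "chain_cocone A le B le' g" for B :: "'b set" and le' g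
  proof -
    define f where "f x = g {x} x" for x
    have hom: "\<And>C. chain_of A le C \<Longrightarrow> pos_hom C le B le' (g C)"
      and compat: "\<And>C D x. chain_of A le C \<Longrightarrow> chain_of A le D \<Longrightarrow> C \<subseteq> D \<Longrightarrow> x \<in> C \<Longrightarrow> g C x = g D x"
      using cc unfolding chain_cocone_def by blast+
    have agree: "\<forall>C. chain_of A le C \<longrightarrow> (\<forall>x\<in>C. f x = g C x)"
    proof (intro allI impI ballI)
      fix C x assume C: "chain_of A le C" and x: "x \<in> C"
      then have xA: "x \<in> A" by (auto simp: chain_of_def)
      show "f x = g C x" unfolding f_def
        using compat[OF single[OF xA] C, of x] x by simp
    qed
    have img: "f ` A \<subseteq> B"
    proof
      fix y assume "y \<in> f ` A"
      then obtain x where x: "x \<in> A" "y = f x" by auto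
      have "g {x} ` {x} \<subseteq> B" using hom[OF single[OF x(1)]] by (simp add: pos_hom_def)
      then show "y \<in> B" using x by (simp add: f_def)
    qed
    have mono: "monotone_on A le le' f"
    proof (rule monotone_onI)
      fix x y assume x: "x \<in> A" and y: "y \<in> A" and xy: "le x y"
      have P: "chain_of A le {x, y}" using pair[OF x y xy] .
      have "monotone_on {x,y} le le' (g {x,y})"
        using hom[OF P] by (simp add: pos_hom_def)
      then have "le' (g {x,y} x) (g {x,y} y)"
        using xy unfolding monotone_on_def by blast
      moreover have "f x = g {x,y} x" "f y = g {x,y} y" using agree P by blast+
      ultimately show "le' (f x) (f y)" by simp
    qed
    have uniq: "\<forall>f'. pos_hom A le B le' f' \<and> (\<forall>C. chain_of A le C \<longrightarrow> (\<forall>x\<in>C. f' x = g C x))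
                  \<longrightarrow> (\<forall>x\<in>A. f' x = f x)"
    proof (intro allI impI ballI)
      fix f' x assume H: "pos_hom A le B le' f' \<and> (\<forall>C. chain_of A le C \<longrightarrow> (\<forall>x\<in>C. f' x = g C x))"
        and x: "x \<in> A"
      have "chain_of A le {x}" using single[OF x] .
      then have "f' x = g {x} x" using H by blast
      then show "f' x = f x" by (simp add: f_def)
    qed
    have "pos_hom A le B le' f" using img mono by (simp add: pos_hom_def)
    then show ?thesis using agree uniq by blast
  qed
  show ?thesis using part1 part2 by blast
qed

end
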